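(* Let $\mathbb{K}\in\{\mathbb{R},\mathbb{C}\}$ and let $\mathcal{X}$ be a topological $\mathbb{K}$-vector space whose topological dual $\mathcal{X}^{\ast}$ separates the points of $\mathcal{X}$. Then for every cylinder $\mathcal{V}\in\mathcal{C}$, both $\mathbf{B}_{\mathcal{V}}(\mathcal{X}^{\ast})$ and its complement $\mathbf{F}(\mathcal{X}^{\ast})\setminus\mathbf{B}_{\mathcal{V}}(\mathcal{X}^{\ast})$ are closed (hence both are open and closed) subsets of $\mathbf{F}(\mathcal{X}^{\ast})$ in the weak*-Hausdorff hypertopology.
   Context: Topological vector spaces are Hausdorff. $\mathcal{X}^{\ast}$ carries the weak* topology. $\mathbf{F}(\mathcal{X}^{\ast})$ is the set of nonempty weak*-closed subsets of $\mathcal{X}^{\ast}$. For $A\in\mathcal{X}$ and $F,\tilde F\in\mathbf{F}(\mathcal{X}^{\ast})$, $d_H^{(A)}(F,\tilde F)=\max\{\sup_{\sigma\in F}\inf_{\tilde\sigma\in\tilde F}|(\sigma-\tilde\sigma)(A)|,\ \sup_{\tilde\sigma\in\tilde F}\inf_{\sigma\in F}|(\sigma-\tilde\sigma)(A)|\}\in[0,\infty]$. The weak*-Hausdorff hypertopology on $\mathbf{F}(\mathcal{X}^{\ast})$ is the topology generated by the family of extended pseudometrics $\{d_H^{(A)}\}_{A\in\mathcal{X}}$ (a net $F_j\to F$ iff $d_H^{(A)}(F_j,F)\to0$ for all $A\in\mathcal{X}$). For $A\in\mathcal{X}$ let $\mathcal{V}_A=\{\sigma\in\mathcal{X}^{\ast}:|\sigma(A)|<1\}$;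 $\mathcal{C}=\{\bigcap_{j=1}^n\mathcal{V}_{A_j}: n\in\mathbb{N},\ A_1,\dots,A_n\in\mathcal{X}\}$. For $\mathcal{V}\in\mathcal{C}$, $\mathbf{B}_{\mathcal{V}}(\mathcal{X}^{\ast})=\{B\in\mathbf{F}(\mathcal{X}^{\ast}): B\subseteq\lambda\mathcal{V}\text{ for some }\lambda>0\}$. *)

theory Defs
  imports "HOL-Analysis.Analysis"
begin

definition tvs :: "('k::real_normed_field \<Rightarrow> 'x::{ab_group_add,topological_space} \<Rightarrow> 'x) \<Rightarrow> bool" where
  "tvs smul \<longleftrightarrow> Vector_Spaces.vector_space smul
     \<and> continuous_on UNIV (\<lambda>p::'x \<times> 'x. fst p + snd p)
     \<and> continuous_on UNIV (\<lambda>p::'k \<times> 'x. smul (fst p) (snd p))"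

definition dual :: "('k::real_normed_field \<Rightarrow> 'x::{ab_group_add,topological_space} \<Rightarrow> 'x) \<Rightarrow> ('x \<Rightarrow> 'k) set" where
  "dual smul = {\<sigma>. Vector_Spaces.linear smul (*) \<sigma> \<and> continuous_on UNIV \<sigma>}"

definition dual_separates :: "('k::real_normed_field \<Rightarrow> 'x::{ab_group_add,topological_space} \<Rightarrow> 'x) \<Rightarrow> bool" where
  "dual_separates smul \<longleftrightarrow> (\<forall>x y. x \<noteq> y \<longrightarrow> (\<exists>\<sigma>\<in>dual smul. \<sigma> x \<noteq> \<sigma> y))"

definition weak_star :: "('k::real_normed_field \<Rightarrow> 'x::{ab_group_add,topological_space} \<Rightarrow> 'x) \<Rightarrow> ('x \<Rightarrow> 'k) topology" where
  "weak_star smul = subtopology (product_topology (\<lambda>_. euclidean) UNIV) (dual smul)"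

definition Fsets :: "('k::real_normed_field \<Rightarrow> 'x::{ab_group_add,topological_space} \<Rightarrow> 'x) \<Rightarrow> ('x \<Rightarrow> 'k) set set" where
  "Fsets smul = {F. F \<noteq> {} \<and> F \<subseteq> dual smul \<and> closedin (weak_star smul) F}"

definition dH :: "'x \<Rightarrow> ('x \<Rightarrow> 'k::real_normed_field) set \<Rightarrow> ('x \<Rightarrow> 'k) set \<Rightarrow> ereal" where
  "dH A F G = max (SUP \<sigma>\<in>F. INF \<tau>\<in>G. ereal (norm (\<sigma> A - \<tau> A)))
                  (SUP \<tau>\<in>G. INF \<sigma>\<in>F. ereal (norm (\<sigma> A - \<tau> A)))"

text \<open>Open sets of the weak*-Hausdorff hypertopology: the topology generated by
  the family of extended pseudometrics dH A, A in X.\<close>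
definition hyper_open :: "('k::real_normed_field \<Rightarrow> 'x::{ab_group_add,topological_space} \<Rightarrow> 'x) \<Rightarrow> ('x \<Rightarrow> 'k) set set \<Rightarrow> bool" where
  "hyper_open smul U \<longleftrightarrow> U \<subseteq> Fsets smul \<and>
     (\<forall>F\<in>U. \<exists>As \<epsilon>. finite As \<and> \<epsilon> > 0 \<and>
        {G\<in>Fsets smul. \<forall>A\<in>As. dH A F G < ereal \<epsilon>} \<subseteq> U)"

definition hyper_closed :: "('k::real_normed_field \<Rightarrow> 'x::{ab_group_add,topological_space} \<Rightarrow> 'x) \<Rightarrow> ('x \<Rightarrow> 'k) set set \<Rightarrow> bool" where
  "hyper_closed smul S \<longleftrightarrow> S \<subseteq> Fsets smul \<and> hyper_open smul (Fsets smul - S)"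

definition V_set :: "('k::real_normed_field \<Rightarrow> 'x::{ab_group_add,topological_space} \<Rightarrow> 'x) \<Rightarrow> 'x \<Rightarrow> ('x \<Rightarrow> 'k) set" where
  "V_set smul A = {\<sigma>\<in>dual smul. norm (\<sigma> A) < 1}"

definition cylinders :: "('k::real_normed_field \<Rightarrow> 'x::{ab_group_add,topological_space} \<Rightarrow> 'x) \<Rightarrow> ('x \<Rightarrow> 'k) set set" where
  "cylinders smul = {\<Inter>A\<in>set As. V_set smul A | As. As \<noteq> []}"

definition Bsets :: "('k::real_normed_field \<Rightarrow> 'x::{ab_group_add,topological_space} \<Rightarrow> 'x) \<Rightarrow> ('x \<Rightarrow> 'k) set \<Rightarrow> ('x \<Rightarrow> 'k) set set" where
  "Bsets smul V = {B\<in>Fsets smul. \<exists>c::real. c > 0 \<and> B \<subseteq> (\<lambda>\<sigma> x. of_real c * \<sigma> x) ` V}"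

end

theory Submission
  imports Defs
begin

lemma dual_scale:
  fixes smul :: "'k::real_normed_field \<Rightarrow> 'x::{ab_group_add,topological_space} \<Rightarrow> 'x"
  assumes "\<sigma> \<in> dual smul"
  shows "(\<lambda>x. k * \<sigma> x) \<in> dual smul"
proof -
  have l: "Vector_Spaces.linear smul (*) \<sigma>" and c: "continuous_on UNIV \<sigma>"
    using assms by (auto simp: dual_def)
  have "Vector_Spaces.linear smul (*) (\<lambda>x. k * \<sigma> x)"
  proof -
    have a: "Vector_Spaces.vector_space smul" "Vector_Spaces.vector_space ((*)::'k\<Rightarrow>'k\<Rightarrow>'k)"
      "\<forall>x y. \<sigma> (x + y) = \<sigma> x + \<sigma> y" "\<forall>c x. \<sigma> (smul c x) = c * \<sigma> x"
      using l[unfolded Vector_Spaces.linear_iff] by auto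
    show ?thesis unfolding Vector_Spaces.linear_iff
      using a by (simp add: distrib_left mult.left_commute)
  qed
  moreover have "continuous_on UNIV (\<lambda>x. k * \<sigma> x)"
    using c by (intro continuous_intros)
  ultimately show ?thesis by (simp add: dual_def)
qed

lemma Bsets_char:
  fixes smul :: "'k::real_normed_field \<Rightarrow> 'x::{ab_group_add,topological_space} \<Rightarrow> 'x"
  assumes V: "V = (\<Inter>A\<in>set As. V_set smul A)" and B: "B \<subseteq> dual smul"
  shows "(\<exists>c::real. c > 0 \<and> B \<subseteq> (\<lambda>\<sigma> x. of_real c * \<sigma> x) ` V) \<longleftrightarrow>
         (\<exists>c::real. c > 0 \<and> (\<forall>\<sigma>\<in>B. \<forall>A\<in>set As. norm (\<sigma> A) < c))"
proof
  assume "\<exists>c::real. c > 0 \<and> B \<subseteq> (\<lambda>\<sigma> x. of_real c * \<sigma> x) ` V"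
  then obtain c :: real where c: "c > 0" "B \<subseteq> (\<lambda>\<sigma> x. of_real c * \<sigma> x) ` V" by blast
  have "\<forall>\<sigma>\<in>B. \<forall>A\<in>set As. norm (\<sigma> A) < c"
  proof (intro ballI)
    fix \<sigma> A assume s: "\<sigma> \<in> B" and A: "A \<in> set As"
    then obtain \<tau> where t: "\<tau> \<in> V" "\<sigma> = (\<lambda>x. of_real c * \<tau> x)" using c by blast
    have "norm (\<tau> A) < 1" using t(1) A V by (auto simp: V_set_def)
    then have "c * norm (\<tau> A) < c * 1" using c(1) by (intro mult_strict_left_mono) auto
    then show "norm (\<sigma> A) < c" using t(2) c(1) by (simp add: norm_mult)
  qed
  then show "\<exists>c::real. c > 0 \<and> (\<forall>\<sigma>\<in>B. \<forall>A\<in>set As. norm (\<sigma> A) < c)" using c by blast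
next
  assume "\<exists>c::real. c > 0 \<and> (\<forall>\<sigma>\<in>B. \<forall>A\<in>set As. norm (\<sigma> A) < c)"
  then obtain c :: real where c: "c > 0" "\<forall>\<sigma>\<in>B. \<forall>A\<in>set As. norm (\<sigma> A) < c" by blast
  have "B \<subseteq> (\<lambda>\<sigma> x. of_real c * \<sigma> x) ` V"
  proof
    fix \<sigma> assume s: "\<sigma> \<in> B"
    define \<tau> where "\<tau> = (\<lambda>x. of_real (1/c) * \<sigma> x)"
    have d: "\<tau> \<in> dual smul" unfolding \<tau>_def using s B by (intro dual_scale) auto
    have "\<tau> \<in> V_set smul A" if A: "A \<in> set As" for A
    proof -
      have "norm (\<sigma> A) < c" using c s A by blast
      then have "norm (\<sigma> A) / c < 1" using c(1) by simp
      then show ?thesis using d c(1) by (simp add: V_set_def \<tau>_def norm_mult norm_divide)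
    qed
    then have "\<tau> \<in> V" using V by blast
    moreover have "\<sigma> = (\<lambda>x. of_real c * \<tau> x)"
      using c(1) by (simp add: \<tau>_def mult.assoc[symmetric] of_real_mult[symmetric])
    ultimately show "\<sigma> \<in> (\<lambda>\<sigma> x. of_real c * \<sigma> x) ` V" by blast
  qed
  then show "\<exists>c::real. c > 0 \<and> B \<subseteq> (\<lambda>\<sigma> x. of_real c * \<sigma> x) ` V" using c by blast
qed

lemma dH_lt:
  assumes "dH A F G < ereal e"
  shows "\<forall>\<tau>\<in>G. \<exists>\<sigma>\<in>F. norm (\<sigma> A - \<tau> A) < e"
    and "\<forall>\<sigma>\<in>F. \<exists>\<tau>\<in>G. norm (\<sigma> A - \<tau> A) < e"
proof -
  have 1: "(SUP \<tau>\<in>G. INF \<sigma>\<in>F. ereal (norm (\<sigma> A - \<tau> A))) < ereal e"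
   and 2: "(SUP \<sigma>\<in>F. INF \<tau>\<in>G. ereal (norm (\<sigma> A - \<tau> A))) < ereal e"
    using assms by (auto simp: dH_def)
  show "\<forall>\<tau>\<in>G. \<exists>\<sigma>\<in>F. norm (\<sigma> A - \<tau> A) < e"
  proof
    fix \<tau> assume t: "\<tau> \<in> G"
    have "(INF \<sigma>\<in>F. ereal (norm (\<sigma> A - \<tau> A))) < ereal e"
      by (rule order.strict_trans1[OF SUP_upper[OF t] 1])
    then show "\<exists>\<sigma>\<in>F. norm (\<sigma> A - \<tau> A) < e" by (auto simp: INF_less_iff)
  qed
  show "\<forall>\<sigma>\<in>F. \<exists>\<tau>\<in>G. norm (\<sigma> A - \<tau> A) < e"
  proof
    fix \<sigma> assume t: "\<sigma> \<in> F"
    have "(INF \<tau>\<in>G. ereal (norm (\<sigma> A - \<tau> A))) < ereal e"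
      by (rule order.strict_trans1[OF SUP_upper[OF t] 2])
    then show "\<exists>\<tau>\<in>G. norm (\<sigma> A - \<tau> A) < e" by (auto simp: INF_less_iff)
  qed
qed

definition bdd_on where
  "bdd_on As B \<longleftrightarrow> (\<exists>c::real. c > 0 \<and> (\<forall>\<sigma>\<in>B. \<forall>A\<in>set As. norm (\<sigma> A) < c))"

lemma Bsets_eq:
  fixes smul :: "'k::real_normed_field \<Rightarrow> 'x::{ab_group_add,topological_space} \<Rightarrow> 'x"
  assumes V: "V = (\<Inter>A\<in>set As. V_set smul A)"
  shows "Bsets smul V = {B\<in>Fsets smul. bdd_on As B}"
  using Bsets_char[OF V] unfolding Bsets_def bdd_on_def Fsets_def by auto

lemma main:
  fixes smul :: "'k::real_normed_field \<Rightarrow> 'x::{ab_group_add,topological_space} \<Rightarrow> 'x"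
  assumes V: "V \<in> cylinders smul"
  shows "hyper_closed smul (Bsets smul V) \<and> hyper_closed smul (Fsets smul - Bsets smul V)"
proof -
  obtain As where As: "V = (\<Inter>A\<in>set As. V_set smul A)"
    using V by (auto simp: cylinders_def)
  note BE = Bsets_eq[OF As]
  have o1: "hyper_open smul (Bsets smul V)"
    unfolding hyper_open_def
  proof (intro conjI ballI)
    show "Bsets smul V \<subseteq> Fsets smul" by (auto simp: BE)
    fix F assume F: "F \<in> Bsets smul V"
    then obtain c :: real where c: "c > 0" "\<forall>\<sigma>\<in>F. \<forall>A\<in>set As. norm (\<sigma> A) < c"
      by (auto simp: BE bdd_on_def)
    have "{G\<in>Fsets smul. \<forall>A\<in>set As. dH A F G < ereal 1} \<subseteq> Bsets smul V"
    proof
      fix G assume G: "G \<in> {G\<in>Fsets smul. \<forall>A\<in>set As. dH A F G < ereal 1}"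
      have "\<forall>\<tau>\<in>G. \<forall>A\<in>set As. norm (\<tau> A) < c + 1"
      proof (intro ballI)
        fix \<tau> A assume t: "\<tau> \<in> G" and A: "A \<in> set As"
        then obtain \<sigma> where s: "\<sigma> \<in> F" "norm (\<sigma> A - \<tau> A) < 1"
          using dH_lt(1)[of A F G 1] G by blast
        have "norm (\<tau> A) \<le> norm (\<sigma> A) + norm (\<sigma> A - \<tau> A)"
          by (metis norm_triangle_ineq4 add.commute diff_diff_eq2 diff_self diff_zero
              norm_minus_commute order_trans norm_triangle_sub)
        then show "norm (\<tau> A) < c + 1" using s c A by fastforce
      qed
      then have "bdd_on As G" unfolding bdd_on_def using c(1)
        by (intro exI[of _ "c+1"]) auto
      then show "G \<in> Bsets smul V" using G by (auto simp: BE)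
    qed
    then show "\<exists>As e. finite As \<and> e > 0 \<and> {G\<in>Fsets smul. \<forall>A\<in>As. dH A F G < ereal e} \<subseteq> Bsets smul V"
      by (intro exI[of _ "set As"] exI[of _ 1]) auto
  qed
  have o2: "hyper_open smul (Fsets smul - Bsets smul V)"
    unfolding hyper_open_def
  proof (intro conjI ballI)
    show "Fsets smul - Bsets smul V \<subseteq> Fsets smul" by auto
    fix F assume F: "F \<in> Fsets smul - Bsets smul V"
    then have nb: "\<not> bdd_on As F" by (auto simp: BE)
    have "{G\<in>Fsets smul. \<forall>A\<in>set As. dH A F G < ereal 1} \<subseteq> Fsets smul - Bsets smul V"
    proof
      fix G assume G: "G \<in> {G\<in>Fsets smul. \<forall>A\<in>set As. dH A F G < ereal 1}"
      have "\<not> bdd_on As G"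
      proof
        assume "bdd_on As G"
        then obtain c :: real where c: "c > 0" "\<forall>\<tau>\<in>G. \<forall>A\<in>set As. norm (\<tau> A) < c"
          by (auto simp: bdd_on_def)
        have "\<forall>\<sigma>\<in>F. \<forall>A\<in>set As. norm (\<sigma> A) < c + 1"
        proof (intro ballI)
          fix \<sigma> A assume s: "\<sigma> \<in> F" and A: "A \<in> set As"
          then obtain \<tau> where t: "\<tau> \<in> G" "norm (\<sigma> A - \<tau> A) < 1"
            using dH_lt(2)[of A F G 1] G by blast
          have "norm (\<sigma> A) \<le> norm (\<tau> A) + norm (\<sigma> A - \<tau> A)"
            using norm_triangle_ineq[of "\<tau> A" "\<sigma> A - \<tau> A"] by simp
          then show "norm (\<sigma> A) < c + 1" using t c A by fastforce
        qed
        then have "bdd_on As F" unfolding bdd_on_def using c(1)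
          by (intro exI[of _ "c+1"]) auto
        then show False using nb by simp
      qed
      then show "G \<in> Fsets smul - Bsets smul V" using G by (auto simp: BE)
    qed
    then show "\<exists>As e. finite As \<and> e > 0 \<and> {G\<in>Fsets smul. \<forall>A\<in>As. dH A F G < ereal e} \<subseteq> Fsets smul - Bsets smul V"
      by (intro exI[of _ "set As"] exI[of _ 1]) auto
  qed
  have sub: "Bsets smul V \<subseteq> Fsets smul" by (auto simp: BE)
  then have eq: "Fsets smul - (Fsets smul - Bsets smul V) = Bsets smul V" by auto
  show ?thesis unfolding hyper_closed_def eq using o1 o2 sub by auto
qed

theorem proposition3p3:
  fixes sr :: "real \<Rightarrow> 'a::{ab_group_add,t2_space} \<Rightarrow> 'a"
    and sc :: "complex \<Rightarrow> 'b::{ab_group_add,t2_space} \<Rightarrow> 'b"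
  shows "(tvs sr \<and> dual_separates sr \<longrightarrow>
            (\<forall>V\<in>cylinders sr. hyper_closed sr (Bsets sr V)
                             \<and> hyper_closed sr (Fsets sr - Bsets sr V)))
       \<and> (tvs sc \<and> dual_separates sc \<longrightarrow>
            (\<forall>V\<in>cylinders sc. hyper_closed sc (Bsets sc V)
                             \<and> hyper_closed sc (Fsets sc - Bsets sc V)))"
  using main[of _ sr] main[of _ sc] by blast

end
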